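(* Suppose that there exists $\lambda>1$ such that $f:\mathbb Q\to\mathbb C$ has property $\mathscr S(\lambda)$, and let $f^\ast$ be defined by $f^\ast(x)=f(x)$ for $x\in\mathbb Q$ and $f^\ast(x)=\lim_{y\in\mathbb Q\cap\mathfrak T(B),y\to x}f(y)$ for $x\in\mathfrak T(B)\setminus\mathbb Q$, $B>0$ (this limit exists and is independent of $B$). Then, as $q\to\infty$, $$f^\ast(a/q)=f^\ast(x)+o(1)$$ uniformly for all $a\in\mathfrak A_q$ and all $x\in\big(\tfrac{a-q^{1/4}}q,\tfrac{a+q^{1/4}}q\big)\cap\big(\mathfrak T_q\cup\tfrac1q\mathfrak A_q\big)$.
   Context: Continued fractions: $x=[b_0(x);b_1(x),\dots]$, $r(x)$ the length for rational $x$, $r(x)=\infty$ otherwise. $\mathfrak T(B):=\{x\in\mathbb R\colon b_j(x)\leq\max(B,j(\log j)^2)\ \forall 1\leq j\leq r(x)\}$. $V(B,m,x):=\{x'\in\mathbb Q\cap\mathfrak T(B)\colon r(x')\geq m,\ b_j(x')=b_j(x)\ \forall j\leq m\}$. Property $\mathscr S(\lambda)$: $\sup_{x\in\mathfrak T(m^\lambda)}\sup_{x',x''\in V(m^\lambda,m,x)}|f(x')-f(x'')|\to0$ as $m\to\infty$. For $q\geq2$: $\mathfrak A_q:=\{0\leq a<q\colon(a,q)=1,\ a/q\in\mathfrak T((\log q)(\log\log q)^2)\}$ and $\mathfrak T_q:=([0,1)\setminus\mathbb Q)\cap\mathfrak T((\log q)(\log\log q)^2)$; $\frac1q\mathfrak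 A_q=\{a/q\colon a\in\mathfrak A_q\}$. *)

theory Defs
  imports Complex_Main "HOL-Library.Extended_Nat" "HOL-Library.Extended_Real"
begin

fun cf_tail :: "real \<Rightarrow> nat \<Rightarrow> real" where
  "cf_tail x 0 = x"
| "cf_tail x (Suc n) = 1 / frac (cf_tail x n)"

definition cf_b :: "real \<Rightarrow> nat \<Rightarrow> int" where
  "cf_b x j = \<lfloor>cf_tail x j\<rfloor>"

text \<open>Length r(x): the index of the last partial quotient for rational x
  (canonical expansion, last quotient at least 2 when r(x) \<ge> 1), infinity otherwise.\<close>
definition cf_len :: "real \<Rightarrow> enat" where
  "cf_len x = (if \<exists>n. frac (cf_tail x n) = 0
               then enat (LEAST n. frac (cf_tail x n) = 0) else \<infinity>)"

definition cfT :: "real \<Rightarrow> real set" where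
  "cfT B = {x. \<forall>j::nat. 1 \<le> j \<and> enat j \<le> cf_len x \<longrightarrow>
                 real_of_int (cf_b x j) \<le> max B (real j * (ln (real j))\<^sup>2)}"

definition cfV :: "real \<Rightarrow> nat \<Rightarrow> real \<Rightarrow> real set" where
  "cfV B m x = {x'. x' \<in> \<rat> \<and> x' \<in> cfT B \<and> cf_len x' \<ge> enat m \<and>
                    (\<forall>j\<le>m. cf_b x' j = cf_b x j)}"

text \<open>Property S(lambda), for f defined on the rationals (values of f off \<rat> are irrelevant).\<close>
definition propS :: "real \<Rightarrow> (real \<Rightarrow> complex) \<Rightarrow> bool" where
  "propS lam f = ((\<lambda>m::nat. SUP x\<in>cfT (real m powr lam).
        SUP p\<in>cfV (real m powr lam) m x \<times> cfV (real m powr lam) m x.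
          ereal (cmod (f (fst p) - f (snd p)))) \<longlonglongrightarrow> 0)"

definition f_star :: "(real \<Rightarrow> complex) \<Rightarrow> real \<Rightarrow> complex" where
  "f_star f x = (if x \<in> \<rat> then f x
     else (THE L. \<exists>B>0. x \<in> cfT B \<and> (f \<longlongrightarrow> L) (at x within (\<rat> \<inter> cfT B))))"

definition cfBq :: "nat \<Rightarrow> real" where
  "cfBq q = ln (real q) * (ln (ln (real q)))\<^sup>2"

definition frakA :: "nat \<Rightarrow> nat set" where
  "frakA q = {a. a < q \<and> coprime a q \<and> real a / real q \<in> cfT (cfBq q)}"

definition frakT :: "nat \<Rightarrow> real set" where
  "frakT q = ({0..<1} - \<rat>) \<inter> cfT (cfBq q)"

end

theory Submission
  imports Defs "HOL-Real_Asymp.Real_Asymp"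
begin

definition cfu :: "real \<Rightarrow> nat \<Rightarrow> real" where
  "cfu x j = frac (cf_tail x j)"

lemma cfu_range: "0 \<le> cfu x j" "cfu x j < 1"
  by (auto simp: cfu_def frac_lt_1)

lemma tail_Suc: "cf_tail x (Suc j) = 1 / cfu x j"
  by (simp add: cfu_def)

declare cf_tail.simps(2)[simp del]

lemma recip_diff: "(u::real) > 0 \<Longrightarrow> v > 0 \<Longrightarrow> \<bar>u - v\<bar> = \<bar>1/u - 1/v\<bar> * (u * v)"
proof -
  assume "u > 0" "v > 0"
  then have "1/u - 1/v = (v - u) / (u * v)" by (simp add: field_simps)
  then have "\<bar>1/u - 1/v\<bar> * (u * v) = \<bar>v - u\<bar>" using \<open>u>0\<close> \<open>v>0\<close> by (simp add: abs_divide)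
  then show ?thesis by simp
qed

lemma tail_split: "cf_tail x j = real_of_int (cf_b x j) + cfu x j"
  by (simp add: cfu_def cf_b_def frac_def)

lemma cfu_nz:
  assumes "cfu x j \<noteq> 0"
  shows "cf_tail x (Suc j) > 1" "cf_b x (Suc j) \<ge> 1"
    "cfu x j \<ge> 1 / (real_of_int (cf_b x (Suc j)) + 1)"
    "cfu x j = 1 / cf_tail x (Suc j)"
proof -
  have u: "0 < cfu x j" "cfu x j < 1" using assms cfu_range[of x j] by auto
  show t: "cf_tail x (Suc j) > 1" using u by (simp add: tail_Suc field_simps)
  then show b1: "cf_b x (Suc j) \<ge> 1" unfolding cf_b_def by linarith
  show "cfu x j = 1 / cf_tail x (Suc j)" using u by (simp add: tail_Suc)
  have "cf_tail x (Suc j) < real_of_int (cf_b x (Suc j)) + 1"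
    unfolding cf_b_def by linarith
  then have "1 < cfu x j * (real_of_int (cf_b x (Suc j)) + 1)"
    using u by (simp add: tail_Suc field_simps)
  moreover have "real_of_int (cf_b x (Suc j)) + 1 > 0" using b1 by simp
  ultimately show "cfu x j \<ge> 1 / (real_of_int (cf_b x (Suc j)) + 1)"
    by (simp add: divide_le_eq)
qed

lemma len_iff: "enat n \<le> cf_len x \<longleftrightarrow> (\<forall>j<n. cfu x j \<noteq> 0)"
proof
  assume h: "enat n \<le> cf_len x"
  show "\<forall>j<n. cfu x j \<noteq> 0"
  proof (intro allI impI notI)
    fix j assume j: "j < n" "cfu x j = 0"
    then have ex: "\<exists>n. frac (cf_tail x n) = 0" by (auto simp: cfu_def)
    have "(LEAST n. frac (cf_tail x n) = 0) \<le> j" using j by (intro Least_le) (simp add: cfu_def)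
    then show False using h j ex by (simp add: cf_len_def)
  qed
next
  assume h: "\<forall>j<n. cfu x j \<noteq> 0"
  show "enat n \<le> cf_len x"
  proof (cases "\<exists>n. frac (cf_tail x n) = 0")
    case True
    have "frac (cf_tail x (LEAST n. frac (cf_tail x n) = 0)) = 0"
      using True by (rule LeastI_ex)
    then have "\<not> (LEAST n. frac (cf_tail x n) = 0) < n" using h by (auto simp: cfu_def)
    then show ?thesis using True by (simp add: cf_len_def)
  qed (simp add: cf_len_def)
qed

lemma cfT_bound: "x \<in> cfT B \<Longrightarrow> 1 \<le> j \<Longrightarrow> enat j \<le> cf_len x \<Longrightarrow>
   real_of_int (cf_b x j) \<le> max B (real j * (ln (real j))\<^sup>2)"
  by (auto simp: cfT_def)

lemma cfT_mono: "B \<le> B' \<Longrightarrow> cfT B \<subseteq> cfT B'"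
  unfolding cfT_def by force

lemma jln_mono: "1 \<le> i \<Longrightarrow> i \<le> j \<Longrightarrow> real i * (ln (real i))\<^sup>2 \<le> real j * (ln (real j))\<^sup>2"
proof -
  assume a: "1 \<le> i" "i \<le> j"
  have "0 \<le> ln (real i)" using a by simp
  moreover have "ln (real i) \<le> ln (real j)" using a by simp
  ultimately have "(ln (real i))\<^sup>2 \<le> (ln (real j))\<^sup>2" by (simp add: power_mono)
  then show ?thesis using a by (intro mult_mono) auto
qed

definition bnd :: "real \<Rightarrow> nat \<Rightarrow> real \<Rightarrow> bool" where
  "bnd y m C = (\<forall>j. 1 \<le> j \<and> j \<le> m + 2 \<and> enat j \<le> cf_len y \<longrightarrow> real_of_int (cf_b y j) \<le> C)"

lemma cfT_bnd:
  assumes "y \<in> cfT B"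
  shows "bnd y m (max 1 (max B (real (m+2) * (ln (real (m+2)))\<^sup>2)))"
  unfolding bnd_def
proof (intro allI impI)
  fix j assume j: "1 \<le> j \<and> j \<le> m + 2 \<and> enat j \<le> cf_len y"
  have "real_of_int (cf_b y j) \<le> max B (real j * (ln (real j))\<^sup>2)"
    using cfT_bound[OF assms] j by auto
  also have "\<dots> \<le> max B (real (m+2) * (ln (real (m+2)))\<^sup>2)"
    using jln_mono[of j "m+2"] j by auto
  finally show "real_of_int (cf_b y j) \<le> max 1 (max B (real (m+2) * (ln (real (m+2)))\<^sup>2))"
    by simp
qed

lemma dist_formula:
  assumes "\<forall>j<n. cf_b y j = cf_b z j \<and> cfu y j \<noteq> 0 \<and> cfu z j \<noteq> 0"
  shows "\<bar>y - z\<bar> = \<bar>cf_tail y n - cf_tail z n\<bar> * (\<Prod>j<n. cfu y j * cfu z j)"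
  using assms
proof (induction n)
  case 0
  then show ?case by simp
next
  case (Suc n)
  have h: "cf_b y n = cf_b z n" "cfu y n \<noteq> 0" "cfu z n \<noteq> 0" using Suc.prems by auto
  have t1: "cf_tail y (Suc n) > 1" "cf_tail z (Suc n) > 1" using cfu_nz h by auto
  have "\<bar>cf_tail y n - cf_tail z n\<bar> = \<bar>cfu y n - cfu z n\<bar>"
    using h by (simp add: tail_split)
  also have "\<dots> = \<bar>1 / cf_tail y (Suc n) - 1 / cf_tail z (Suc n)\<bar>"
    using cfu_nz(4) h by simp
  also have "\<dots> = \<bar>cf_tail y (Suc n) - cf_tail z (Suc n)\<bar> * (cfu y n * cfu z n)"
    using recip_diff[of "cf_tail y (Suc n)" "cf_tail z (Suc n)"] t1 cfu_nz(4)[OF h(2)] cfu_nz(4)[OF h(3)]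
    by (simp add: abs_minus_commute)
  finally show ?case using Suc by (simp add: mult.assoc)
qed

lemma gap1:
  assumes nz: "\<forall>i\<le>n. cfu y i \<noteq> 0" and b: "bnd y m C" and nm: "n \<le> m"
  shows "1 - cfu y n \<ge> 1 / (2 * (C + 1))"
proof -
  have un: "cfu y n \<noteq> 0" using nz by auto
  have len1: "enat (Suc n) \<le> cf_len y" using nz by (auto simp: len_iff)
  have bC: "real_of_int (cf_b y (Suc n)) \<le> C" using b len1 nm unfolding bnd_def by auto
  have b1: "cf_b y (Suc n) \<ge> 1" using cfu_nz[OF un] by auto
  have C1: "C \<ge> 1" using bC b1 by linarith
  have u: "cfu y n = 1 / cf_tail y (Suc n)" using cfu_nz[OF un] by auto
  have t: "cf_tail y (Suc n) = real_of_int (cf_b y (Suc n)) + cfu y (Suc n)" by (rule tail_split)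
  have t1: "cf_tail y (Suc n) > 1" using cfu_nz[OF un] by auto
  show ?thesis
  proof (cases "cf_b y (Suc n) \<ge> 2")
    case True
    then have "cf_tail y (Suc n) \<ge> 2" using t cfu_range[of y "Suc n"] by linarith
    then have "cfu y n \<le> 1/2" unfolding u by (intro divide_left_mono) auto
    moreover have "1 / (2 * (C + 1)) \<le> 1/2" using C1 by (simp add: field_simps)
    ultimately show ?thesis by linarith
  next
    case False
    then have bb: "cf_b y (Suc n) = 1" using b1 by linarith
    have u'nz: "cfu y (Suc n) \<noteq> 0" using t t1 bb by auto
    have nz2: "\<forall>i<Suc (Suc n). cfu y i \<noteq> 0" using nz u'nz by (metis less_Suc_eq_le le_Suc_eq)
    have len2: "enat (Suc (Suc n)) \<le> cf_len y" using nz2 by (simp add: len_iff)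
    have bC2: "real_of_int (cf_b y (Suc (Suc n))) \<le> C" using b len2 nm unfolding bnd_def by auto
    have u'ge: "cfu y (Suc n) \<ge> 1 / (real_of_int (cf_b y (Suc (Suc n))) + 1)"
      using cfu_nz[OF u'nz] by auto
    have b2: "cf_b y (Suc (Suc n)) \<ge> 1" using cfu_nz[OF u'nz] by auto
    have "1 / (C + 1) \<le> 1 / (real_of_int (cf_b y (Suc (Suc n))) + 1)"
      using bC2 b2 by (intro divide_left_mono) auto
    then have v: "cfu y (Suc n) \<ge> 1 / (C + 1)" using u'ge by linarith
    define v' where "v' = cfu y (Suc n)"
    have v'r: "0 < v'" "v' < 1" using u'nz cfu_range[of y "Suc n"] v'_def by auto
    have "1 - cfu y n = v' / (1 + v')" using u t bb v'r unfolding v'_def by (simp add: field_simps)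
    also have "\<dots> \<ge> v' / 2" using v'r by (intro divide_left_mono) auto
    finally have "1 - cfu y n \<ge> v' / 2" .
    moreover have "v' / 2 \<ge> 1 / (2 * (C + 1))"
    proof -
      have "(1 / (C + 1)) / 2 \<le> v' / 2" using divide_right_mono[OF v, of 2] unfolding v'_def by simp
      moreover have "1 / (2 * (C + 1)) = (1 / (C + 1)) / 2" by simp
      ultimately show ?thesis by (simp only:)
    qed
    ultimately show ?thesis by linarith
  qed
qed

lemma gap_b:
  assumes lt: "cf_b y n < cf_b z n" and nz: "\<forall>i<n. cfu y i \<noteq> 0" and b: "bnd y m C"
    and nm: "n \<le> m" and C1: "C \<ge> 1"
  shows "\<bar>cf_tail y n - cf_tail z n\<bar> \<ge> 1 / (2 * (C + 1))"
proof -
  have "cf_tail z n \<ge> real_of_int (cf_b z n)" using tail_split[of z n] cfu_range[of z n] by linarith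
  moreover have "real_of_int (cf_b z n) \<ge> real_of_int (cf_b y n) + 1" using lt by linarith
  ultimately have d: "cf_tail z n - cf_tail y n \<ge> 1 - cfu y n" using tail_split[of y n] by linarith
  show ?thesis
  proof (cases "cfu y n = 0")
    case True
    have "1 / (2 * (C + 1)) \<le> 1" using C1 by (simp add: field_simps)
    then show ?thesis using d True by linarith
  next
    case False
    then have "\<forall>i\<le>n. cfu y i \<noteq> 0" using nz le_less by auto
    from gap1[OF this b nm] show ?thesis using d by linarith
  qed
qed

lemma u_ge:
  assumes nz: "\<forall>i\<le>j. cfu y i \<noteq> 0" and b: "bnd y m C" and jm: "j + 1 \<le> m + 2"
  shows "cfu y j \<ge> 1 / (C + 1)"
proof -
  have un: "cfu y j \<noteq> 0" using nz by auto
  have "enat (Suc j) \<le> cf_len y" using nz by (auto simp: len_iff)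
  then have bC: "real_of_int (cf_b y (Suc j)) \<le> C" using b jm unfolding bnd_def by auto
  have b1: "cf_b y (Suc j) \<ge> 1" using cfu_nz[OF un] by auto
  have "1 / (C + 1) \<le> 1 / (real_of_int (cf_b y (Suc j)) + 1)"
    using bC b1 by (intro divide_left_mono) auto
  then show ?thesis using cfu_nz(3)[OF un] by linarith
qed

lemma gap_u:
  assumes eq: "cf_b y n = cf_b z n" and u0: "cfu y n = 0" and nz: "\<forall>i<n. cfu z i \<noteq> 0"
    and b: "bnd z m C" and nm: "n \<le> m" and ne: "cf_tail y n \<noteq> cf_tail z n"
  shows "\<bar>cf_tail y n - cf_tail z n\<bar> \<ge> 1 / (C + 1)"
proof -
  have G: "\<bar>cf_tail y n - cf_tail z n\<bar> = cfu z n"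
    using eq u0 tail_split[of y n] tail_split[of z n] cfu_range[of z n] by simp
  then have "cfu z n \<noteq> 0" using ne eq u0 tail_split[of y n] tail_split[of z n] by auto
  then have "\<forall>i\<le>n. cfu z i \<noteq> 0" using nz le_less by auto
  from u_ge[OF this b] nm show ?thesis using G by simp
qed

lemma main_sep:
  assumes ne: "y \<noteq> z" and C1: "C \<ge> 1" and hy: "bnd y m C" and hz: "bnd z m C"
    and close: "(C + 1) ^ (2 * m + 2) * \<bar>y - z\<bar> < 1"
  shows "(\<forall>j\<le>m. cf_b y j = cf_b z j) \<and> enat m \<le> cf_len y \<and> enat m \<le> cf_len z"
proof (rule ccontr)
  define bad where "bad n = (cf_b y n \<noteq> cf_b z n \<or> (n < m \<and> (cfu y n = 0 \<or> cfu z n = 0)))" for n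
  assume "\<not> ?thesis"
  then have ex: "\<exists>n. n \<le> m \<and> bad n" unfolding bad_def len_iff by (meson less_imp_le_nat)
  define n where "n = (LEAST n. n \<le> m \<and> bad n)"
  have nb: "n \<le> m \<and> bad n" unfolding n_def using ex by (rule LeastI_ex)
  have before: "\<forall>j<n. cf_b y j = cf_b z j \<and> cfu y j \<noteq> 0 \<and> cfu z j \<noteq> 0"
  proof (intro allI impI)
    fix j assume j: "j < n"
    then have "\<not> (j \<le> m \<and> bad j)" unfolding n_def by (rule not_less_Least)
    then show "cf_b y j = cf_b z j \<and> cfu y j \<noteq> 0 \<and> cfu z j \<noteq> 0"
      using j nb unfolding bad_def by auto
  qed
  define G where "G = \<bar>cf_tail y n - cf_tail z n\<bar>"
  define P where "P = (\<Prod>j<n. cfu y j * cfu z j)"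
  have D: "\<bar>y - z\<bar> = G * P" unfolding G_def P_def by (rule dist_formula[OF before])
  have Cp: "C + 1 > 0" using C1 by simp
  have P: "P \<ge> (1 / (C + 1)) ^ (2 * n)"
  proof -
    have "(\<Prod>j<n. (1 / (C + 1)) * (1 / (C + 1))) \<le> P" unfolding P_def
    proof (rule prod_mono)
      fix j assume j: "j \<in> {..<n}"
      have ny: "\<forall>i\<le>j. cfu y i \<noteq> 0" and nz: "\<forall>i\<le>j. cfu z i \<noteq> 0" using before j by auto
      have "cfu y j \<ge> 1 / (C + 1)" "cfu z j \<ge> 1 / (C + 1)"
        using u_ge[OF ny hy] u_ge[OF nz hz] j nb by auto
      then show "0 \<le> 1 / (C + 1) * (1 / (C + 1)) \<and> 1 / (C + 1) * (1 / (C + 1)) \<le> cfu y j * cfu z j"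
        using Cp mult_mono[of "1 / (C + 1)" "cfu y j" "1 / (C + 1)" "cfu z j"] by (simp del: divide_divide_eq_left')
    qed
    then show ?thesis by (simp add: power_mult power2_eq_square)
  qed
  have G0: "G \<noteq> 0" using D ne by auto
  have G: "G \<ge> 1 / (2 * (C + 1))"
  proof (cases "cf_b y n = cf_b z n")
    case False
    then consider "cf_b y n < cf_b z n" | "cf_b z n < cf_b y n" by linarith
    then show ?thesis
    proof cases
      case 1
      then show ?thesis unfolding G_def using gap_b[OF 1 _ hy _ C1] before nb by auto
    next
      case 2
      then show ?thesis unfolding G_def using gap_b[OF 2 _ hz _ C1] before nb
        by (auto simp: abs_minus_commute)
    qed
  next
    case True
    then have c: "cfu y n = 0 \<or> cfu z n = 0" using nb unfolding bad_def by auto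
    have "1 / (2 * (C + 1)) \<le> 1 / (C + 1)" using Cp by (simp add: field_simps)
    moreover have "G \<ge> 1 / (C + 1)"
    proof (cases "cfu y n = 0")
      case True
      show ?thesis unfolding G_def
        using gap_u[OF \<open>cf_b y n = cf_b z n\<close> True _ hz] before nb G0 G_def by auto
    next
      case False
      then have "cfu z n = 0" using c by auto
      then show ?thesis unfolding G_def
        using gap_u[OF \<open>cf_b y n = cf_b z n\<close>[symmetric] _ _ hy] before nb G0 G_def
        by (auto simp: abs_minus_commute)
    qed
    ultimately show ?thesis by linarith
  qed
  have "(1 / (C + 1)) ^ (2 * m + 2) \<le> (1 / (C + 1)) ^ (2 * n + 2)"
    using nb Cp C1 by (intro power_decreasing) auto
  also have "\<dots> = (1 / (C + 1)) ^ (2 * n) * ((1 / (C + 1)) * (1 / (C + 1)))"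
    by (simp add: power_add power2_eq_square)
  also have "\<dots> \<le> P * G"
  proof (rule mult_mono)
    show "(1 / (C + 1)) ^ (2 * n) \<le> P" by (rule P)
    have "2 * (C + 1) \<le> (C + 1) * (C + 1)" using C1 Cp by (intro mult_right_mono) auto
    then have "1 / ((C + 1) * (C + 1)) \<le> 1 / (2 * (C + 1))"
      using Cp by (intro divide_left_mono) auto
    then have "(1 / (C + 1)) * (1 / (C + 1)) \<le> 1 / (2 * (C + 1))" by simp
    then show "(1 / (C + 1)) * (1 / (C + 1)) \<le> G" using G by linarith
    show "0 \<le> P" using P Cp by (meson order_trans zero_le_divide_1_iff zero_le_power less_imp_le)
    show "0 \<le> (1 / (C + 1)) * (1 / (C + 1))" using Cp by simp
  qed
  finally have "(1 / (C + 1)) ^ (2 * m + 2) \<le> \<bar>y - z\<bar>" using D by (simp add: mult.commute)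
  then have "(C + 1) ^ (2 * m + 2) * (1 / (C + 1)) ^ (2 * m + 2) \<le> (C + 1) ^ (2 * m + 2) * \<bar>y - z\<bar>"
    using Cp by (intro mult_left_mono) auto
  moreover have "(C + 1) ^ (2 * m + 2) * (1 / (C + 1)) ^ (2 * m + 2) = 1"
    using Cp by (simp add: power_mult_distrib[symmetric])
  ultimately show False using close by linarith
qed

lemma irr_tail: "x \<notin> \<rat> \<Longrightarrow> cf_tail x j \<notin> \<rat>"
proof (induction j)
  case 0 then show ?case by simp
next
  case (Suc j)
  have "frac (cf_tail x j) \<notin> \<rat>"
  proof
    assume "frac (cf_tail x j) \<in> \<rat>"
    then have "frac (cf_tail x j) + of_int \<lfloor>cf_tail x j\<rfloor> \<in> \<rat>" by (intro Rats_add) auto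
    then show False using Suc by (simp add: frac_def)
  qed
  then have "1 / frac (cf_tail x j) \<notin> \<rat>"
    by (metis Rats_divide Rats_1 divide_divide_eq_right div_by_1 mult_1)
  then show ?case by (simp add: cf_tail.simps(2))
qed

lemma irr_nz: "x \<notin> \<rat> \<Longrightarrow> cfu x j \<noteq> 0"
  using irr_tail[of x j] Ints_subset_Rats by (auto simp: cfu_def)

lemma irr_len: "x \<notin> \<rat> \<Longrightarrow> enat n \<le> cf_len x"
  using irr_nz by (simp add: len_iff)

lemma irr_b1: "x \<notin> \<rat> \<Longrightarrow> 1 \<le> j \<Longrightarrow> cf_b x j \<ge> 1"
  using irr_nz[of x "j - 1"] cfu_nz(2)[of x "j - 1"] by (cases j) auto

fun cfl :: "int list \<Rightarrow> real" where
  "cfl [] = 2"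
| "cfl (b # bs) = real_of_int b + 1 / cfl bs"

lemma cfl_gt1: "\<forall>b\<in>set bs. b \<ge> 1 \<Longrightarrow> cfl bs > 1"
proof (induction bs)
  case Nil then show ?case by simp
next
  case (Cons b bs)
  then have "cfl bs > 1" "b \<ge> 1" by auto
  moreover have "1 / cfl bs > 0" using \<open>cfl bs > 1\<close> by simp
  moreover have "real_of_int b \<ge> 1" using \<open>b \<ge> 1\<close> by simp
  ultimately have "1 < real_of_int b + 1 / cfl bs" by linarith
  then show ?case by simp
qed

lemma cfl_rat: "cfl bs \<in> \<rat>"
  by (induction bs) auto

lemma tail_shift: "cf_tail x (k + j) = cf_tail (cf_tail x j) k"
  by (induction k) (auto simp: cf_tail.simps(2))

lemma cons_tail:
  assumes "w > 1"
  shows "cf_tail (real_of_int c + 1 / w) (Suc k) = cf_tail w k"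
proof -
  have "frac (real_of_int c + 1 / w) = 1 / w"
    using assms by (simp add: frac_eq)
  then have "cf_tail (real_of_int c + 1 / w) 1 = w" by (simp add: cf_tail.simps(2))
  then show ?thesis using tail_shift[of "real_of_int c + 1 / w" k 1] by simp
qed

lemma cfl_props:
  assumes "\<forall>b\<in>set bs. b \<ge> 1"
  shows "(\<forall>k\<le>length bs. \<lfloor>cf_tail (cfl (c # bs)) k\<rfloor> = (c # bs) ! k \<and>
            frac (cf_tail (cfl (c # bs)) k) \<noteq> 0) \<and>
         cf_tail (cfl (c # bs)) (Suc (length bs)) = 2"
  using assms
proof (induction bs arbitrary: c)
  case Nil
  have f: "frac (real_of_int c + 1/2) = 1/2"
    by (simp add: frac_eq)
  have "\<lfloor>real_of_int c + 1/2\<rfloor> = c" by linarith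
  then show ?case using f by (simp add: cf_tail.simps(2))
next
  case (Cons d bs)
  define w where "w = cfl (d # bs)"
  have w1: "w > 1" unfolding w_def using Cons.prems by (intro cfl_gt1) auto
  have IH: "(\<forall>k\<le>length bs. \<lfloor>cf_tail w k\<rfloor> = (d # bs) ! k \<and> frac (cf_tail w k) \<noteq> 0) \<and>
         cf_tail w (Suc (length bs)) = 2" unfolding w_def using Cons by auto
  have e: "cfl (c # d # bs) = real_of_int c + 1 / w" unfolding w_def by simp
  have f0: "frac (real_of_int c + 1 / w) = 1 / w"
    using w1 by (simp add: frac_eq)
  have fl0: "\<lfloor>real_of_int c + 1 / w\<rfloor> = c"
  proof -
    have "0 < 1 / w" "1 / w < 1" using w1 by auto
    then show ?thesis by linarith
  qed
  have A: "\<forall>k\<le>length (d # bs). \<lfloor>cf_tail (cfl (c # d # bs)) k\<rfloor> = (c # d # bs) ! k \<and>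
            frac (cf_tail (cfl (c # d # bs)) k) \<noteq> 0"
  proof (intro allI impI)
    fix k assume k: "k \<le> length (d # bs)"
    show "\<lfloor>cf_tail (cfl (c # d # bs)) k\<rfloor> = (c # d # bs) ! k \<and> frac (cf_tail (cfl (c # d # bs)) k) \<noteq> 0"
    proof (cases k)
      case 0 then show ?thesis using e f0 fl0 w1 by simp
    next
      case (Suc k')
      then show ?thesis using e cons_tail[OF w1] IH k by simp
    qed
  qed
  have B: "cf_tail (cfl (c # d # bs)) (Suc (length (d # bs))) = 2"
    using e cons_tail[OF w1] IH by simp
  show ?case using A B by blast
qed

definition Yx :: "real \<Rightarrow> nat \<Rightarrow> real" where
  "Yx x n = cfl (cf_b x 0 # map (cf_b x) [1..<Suc n])"

lemma Y_basic:
  assumes x: "x \<notin> \<rat>"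
  shows "(\<forall>k\<le>n. cf_b (Yx x n) k = cf_b x k \<and> cfu (Yx x n) k \<noteq> 0) \<and> cf_tail (Yx x n) (Suc n) = 2"
proof -
  define bs where "bs = map (cf_b x) [1..<Suc n]"
  have ge: "\<forall>b\<in>set bs. b \<ge> 1" unfolding bs_def using irr_b1[OF x] by auto
  have lb: "length bs = n" unfolding bs_def by simp
  have nth: "(cf_b x 0 # bs) ! k = cf_b x k" if "k \<le> n" for k
  proof (cases k)
    case 0 then show ?thesis by simp
  next
    case (Suc k')
    then have "k' < n" using that by simp
    then show ?thesis using Suc unfolding bs_def by (simp del: upt_Suc add: nth_map nth_upt)
  qed
  from cfl_props[OF ge, of "cf_b x 0"] show ?thesis
    unfolding Yx_def bs_def[symmetric] lb using nth by (auto simp: cf_b_def cfu_def)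
qed

lemma Y_b: "x \<notin> \<rat> \<Longrightarrow> k \<le> n \<Longrightarrow> cf_b (Yx x n) k = cf_b x k"
  using Y_basic by blast
lemma Y_nz: "x \<notin> \<rat> \<Longrightarrow> k \<le> n \<Longrightarrow> cfu (Yx x n) k \<noteq> 0"
  using Y_basic by blast
lemma Y_last: "x \<notin> \<rat> \<Longrightarrow> cf_tail (Yx x n) (Suc n) = 2"
  using Y_basic by blast

lemma Y_len: "x \<notin> \<rat> \<Longrightarrow> enat (Suc n) \<le> cf_len (Yx x n)"
  using Y_nz by (simp add: len_iff)

lemma Y_len_le: "x \<notin> \<rat> \<Longrightarrow> enat j \<le> cf_len (Yx x n) \<Longrightarrow> j \<le> Suc n"
proof (rule ccontr)
  assume x: "x \<notin> \<rat>" and j: "enat j \<le> cf_len (Yx x n)" "\<not> j \<le> Suc n"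
  then have "cfu (Yx x n) (Suc n) \<noteq> 0" by (simp add: len_iff)
  then show False using Y_last[OF x] by (simp add: cfu_def)
qed

lemma Y_rat: "Yx x n \<in> \<rat>"
  unfolding Yx_def by (rule cfl_rat)

lemma ln3: "ln (3::real) \<ge> 1"
proof -
  have "exp 1 \<le> (3::real)" by (rule exp_le)
  then have "ln (exp 1) \<le> ln (3::real)" by (subst ln_le_cancel_iff) auto
  then show ?thesis by simp
qed

lemma Y_cfT:
  assumes x: "x \<notin> \<rat>" and xB: "x \<in> cfT B" and n: "2 \<le> n"
  shows "Yx x n \<in> cfT B"
  unfolding cfT_def
proof (intro CollectI allI impI)
  fix j assume j: "1 \<le> j \<and> enat j \<le> cf_len (Yx x n)"
  then have jn: "j \<le> Suc n" using Y_len_le[OF x] by auto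
  show "real_of_int (cf_b (Yx x n) j) \<le> max B (real j * (ln (real j))\<^sup>2)"
  proof (cases "j \<le> n")
    case True
    have e: "cf_b (Yx x n) j = cf_b x j" by (rule Y_b[OF x True])
    have "real_of_int (cf_b x j) \<le> max B (real j * (ln (real j))\<^sup>2)"
      using j irr_len[OF x, of j] by (intro cfT_bound[OF xB]) auto
    then show ?thesis unfolding e .
  next
    case False
    then have jj: "j = Suc n" using jn by auto
    have "cf_b (Yx x n) j = 2" using Y_last[OF x] jj by (simp add: cf_b_def)
    moreover have "real 3 * (ln (real 3))\<^sup>2 \<le> real j * (ln (real j))\<^sup>2"
      using jj n by (intro jln_mono) auto
    moreover have "(3::real) * (ln 3)\<^sup>2 \<ge> 3"
    proof -
      have "(ln (3::real))\<^sup>2 \<ge> 1" using ln3 by (simp add: one_le_power)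
      then show ?thesis by simp
    qed
    ultimately show ?thesis by simp
  qed
qed

lemma pair_half: "cfu x j * cfu x (Suc j) \<le> 1 / 2"
proof (cases "cfu x j = 0")
  case True then show ?thesis by simp
next
  case False
  define v where "v = cfu x (Suc j)"
  have v: "0 \<le> v" "v < 1" unfolding v_def using cfu_range by auto
  have b: "real_of_int (cf_b x (Suc j)) \<ge> 1" using cfu_nz(2)[OF False] by simp
  have u: "cfu x j = 1 / (real_of_int (cf_b x (Suc j)) + v)"
    using cfu_nz(4)[OF False] tail_split[of x "Suc j"] unfolding v_def by simp
  have "cfu x j \<le> 1 / (1 + v)" unfolding u using b v by (intro divide_left_mono) auto
  then have "cfu x j * v \<le> 1 / (1 + v) * v" using v by (intro mult_right_mono) auto
  also have "\<dots> \<le> 1 / 2" using v by (simp add: field_simps)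
  finally show ?thesis unfolding v_def .
qed

lemma prod_half: "(\<Prod>j<n. cfu x j) \<le> (1 / 2) ^ (n div 2)"
proof (induction n rule: less_induct)
  case (less n)
  show ?case
  proof (cases "n < 2")
    case True
    have "(\<Prod>j<n. cfu x j) \<le> 1"
      using cfu_range by (intro prod_le_1) (auto simp: less_imp_le)
    then show ?thesis using True by simp
  next
    case False
    then obtain k where k: "n = Suc (Suc k)" by (metis add_2_eq_Suc le_Suc_ex not_less)
    have "(\<Prod>j<n. cfu x j) = (\<Prod>j<k. cfu x j) * (cfu x k * cfu x (Suc k))"
      unfolding k by (simp add: mult.assoc)
    also have "\<dots> \<le> (1 / 2) ^ (k div 2) * (1 / 2)"
    proof -
      have a: "(\<Prod>j<k. cfu x j) \<le> (1 / 2) ^ (k div 2)" using less.IH[of k] k by simp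
      have c: "0 \<le> cfu x k * cfu x (Suc k)" by (intro mult_nonneg_nonneg cfu_range(1))
      have d: "(0::real) \<le> (1 / 2) ^ (k div 2)" by simp
      show ?thesis by (rule mult_mono[OF a pair_half d c])
    qed
    also have "\<dots> = (1 / 2) ^ (n div 2)" unfolding k by simp
    finally show ?thesis .
  qed
qed

lemma Y_close:
  assumes x: "x \<notin> \<rat>"
  shows "\<bar>Yx x n - x\<bar> \<le> (1 / 2) ^ (n div 2)"
proof -
  have before: "\<forall>j<n. cf_b (Yx x n) j = cf_b x j \<and> cfu (Yx x n) j \<noteq> 0 \<and> cfu x j \<noteq> 0"
    using Y_b[OF x] Y_nz[OF x] irr_nz[OF x] by auto
  have D: "\<bar>Yx x n - x\<bar> = \<bar>cf_tail (Yx x n) n - cf_tail x n\<bar> * (\<Prod>j<n. cfu (Yx x n) j * cfu x j)"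
    by (rule dist_formula[OF before])
  have "\<bar>cf_tail (Yx x n) n - cf_tail x n\<bar> = \<bar>cfu (Yx x n) n - cfu x n\<bar>"
    using Y_b[OF x, of n n] tail_split[of "Yx x n" n] tail_split[of x n] by simp
  also have "\<dots> \<le> 1" using cfu_range[of "Yx x n" n] cfu_range[of x n] by linarith
  finally have G: "\<bar>cf_tail (Yx x n) n - cf_tail x n\<bar> \<le> 1" .
  have P: "(\<Prod>j<n. cfu (Yx x n) j * cfu x j) \<le> (\<Prod>j<n. cfu x j)"
  proof (rule prod_mono)
    fix j assume "j \<in> {..<n}"
    show "0 \<le> cfu (Yx x n) j * cfu x j \<and> cfu (Yx x n) j * cfu x j \<le> cfu x j"
      using cfu_range[of "Yx x n" j] cfu_range[of x j] by (auto intro: mult_left_le_one_le)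
  qed
  have P0: "0 \<le> (\<Prod>j<n. cfu (Yx x n) j * cfu x j)" by (intro prod_nonneg ballI mult_nonneg_nonneg cfu_range(1))
  have "\<bar>Yx x n - x\<bar> \<le> 1 * (\<Prod>j<n. cfu x j)"
    unfolding D by (rule mult_mono[OF G P _ P0]) simp
  also have "\<dots> \<le> (1 / 2) ^ (n div 2)" using prod_half by simp
  finally show ?thesis .
qed

lemma half_lim: "(\<lambda>n::nat. (1 / 2 :: real) ^ (n div 2)) \<longlonglongrightarrow> 0"
proof -
  have "filterlim (\<lambda>n::nat. n div 2) sequentially sequentially"
    unfolding filterlim_at_top
  proof
    fix Z :: nat
    show "\<forall>\<^sub>F x in sequentially. Z \<le> x div 2"
      unfolding eventually_sequentially by (rule exI[of _ "2 * Z"]) auto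
  qed
  from filterlim_compose[OF LIMSEQ_power_zero[of "1/2::real"] this] show ?thesis by simp
qed

lemma Y_lim: "x \<notin> \<rat> \<Longrightarrow> Yx x \<longlonglongrightarrow> x"
proof -
  assume x: "x \<notin> \<rat>"
  have l1: "(\<lambda>n. x - (1 / 2) ^ (n div 2)) \<longlonglongrightarrow> x - 0"
    by (intro tendsto_intros half_lim)
  have l2: "(\<lambda>n. x + (1 / 2) ^ (n div 2)) \<longlonglongrightarrow> x + 0"
    by (intro tendsto_intros half_lim)
  show ?thesis
  proof (rule tendsto_sandwich[OF _ _ l1[simplified] l2[simplified]])
    show "\<forall>\<^sub>F n in sequentially. x - (1 / 2) ^ (n div 2) \<le> Yx x n"
    proof (intro always_eventually allI)
      fix n show "x - (1 / 2) ^ (n div 2) \<le> Yx x n" using Y_close[OF x, of n] unfolding abs_le_iff by linarith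
    qed
    show "\<forall>\<^sub>F n in sequentially. Yx x n \<le> x + (1 / 2) ^ (n div 2)"
    proof (intro always_eventually allI)
      fix n show "Yx x n \<le> x + (1 / 2) ^ (n div 2)" using Y_close[OF x, of n] unfolding abs_le_iff by linarith
    qed
  qed
qed

lemma propS_ext:
  assumes S: "propS lam f" and e: "e > 0"
  shows "\<exists>M. \<forall>m\<ge>M. \<forall>z\<in>cfT (real m powr lam). \<forall>x'\<in>cfV (real m powr lam) m z.
           \<forall>x''\<in>cfV (real m powr lam) m z. cmod (f x' - f x'') < e"
proof -
  define S where "S m = (SUP x\<in>cfT (real m powr lam).
        SUP p\<in>cfV (real m powr lam) m x \<times> cfV (real m powr lam) m x.
          ereal (cmod (f (fst p) - f (snd p))))" for m :: nat
  have "S \<longlonglongrightarrow> 0" using S unfolding propS_def S_def by simp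
  then have "\<forall>\<^sub>F m in sequentially. S m < ereal e" using e by (intro order_tendstoD(2)) auto
  then obtain M where M: "\<And>m. m \<ge> M \<Longrightarrow> S m < ereal e" unfolding eventually_sequentially by blast
  show ?thesis
  proof (intro exI allI impI ballI)
    fix m z x' x'' assume m: "M \<le> m" and z: "z \<in> cfT (real m powr lam)"
      and x': "x' \<in> cfV (real m powr lam) m z" and x'': "x'' \<in> cfV (real m powr lam) m z"
    have "ereal (cmod (f x' - f x'')) \<le> (SUP p\<in>cfV (real m powr lam) m z \<times> cfV (real m powr lam) m z.
          ereal (cmod (f (fst p) - f (snd p))))"
      using SUP_upper[of "(x', x'')" "cfV (real m powr lam) m z \<times> cfV (real m powr lam) m z"
          "\<lambda>p. ereal (cmod (f (fst p) - f (snd p)))"] x' x'' by simp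
    also have "\<dots> \<le> S m" unfolding S_def using z by (rule SUP_upper)
    also have "\<dots> < ereal e" using M m by simp
    finally show "cmod (f x' - f x'') < e" by simp
  qed
qed

lemma pick_m:
  assumes "lam > 1"
  shows "\<exists>m\<ge>M. real m powr lam \<ge> B"
proof -
  define m where "m = max M (max 1 (nat \<lceil>B\<rceil>))"
  have m1: "real m \<ge> 1" unfolding m_def by simp
  have mB: "real m \<ge> B" unfolding m_def by linarith
  have "real m powr 1 \<le> real m powr lam" using assms m1 by (intro powr_mono) auto
  then have "real m powr lam \<ge> B" using mB m1 by simp
  then show ?thesis unfolding m_def by (intro exI[of _ m]) (auto simp: m_def)
qed

lemma Y_cfV:
  assumes x: "x \<notin> \<rat>" "x \<in> cfT B" and Bm: "B \<le> real m powr lam" and mn: "m \<le> n" and n2: "2 \<le> n"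
  shows "Yx x n \<in> cfV (real m powr lam) m x"
  unfolding cfV_def
proof (intro CollectI conjI allI impI)
  show "Yx x n \<in> \<rat>" by (rule Y_rat)
  show "Yx x n \<in> cfT (real m powr lam)" using Y_cfT[OF x n2] cfT_mono[OF Bm] by auto
  have "enat m \<le> enat (Suc n)" using mn by simp
  then show "enat m \<le> cf_len (Yx x n)" using Y_len[OF x(1), of n] by (rule order_trans)
  fix j assume "j \<le> m"
  then show "cf_b (Yx x n) j = cf_b x j" using mn Y_b[OF x(1)] by auto
qed

lemma close_cfV:
  assumes x: "x \<notin> \<rat>" "x \<in> cfT B" and y: "y \<in> \<rat>" "y \<in> cfT B"
    and Bm: "B \<le> real m powr lam"
    and cl: "(max 1 (max B (real (m+2) * (ln (real (m+2)))\<^sup>2)) + 1) ^ (2 * m + 2) * \<bar>y - x\<bar> < 1"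
  shows "y \<in> cfV (real m powr lam) m x"
proof -
  have ne: "y \<noteq> x" using x y by auto
  from main_sep[OF ne _ cfT_bnd[OF y(2)] cfT_bnd[OF x(2)] cl]
  have s: "(\<forall>j\<le>m. cf_b y j = cf_b x j) \<and> enat m \<le> cf_len y" by simp
  show ?thesis unfolding cfV_def using s y cfT_mono[OF Bm] by auto
qed

lemma fstar_seq:
  assumes lam: "lam > 1" "propS lam f" and x: "x \<notin> \<rat>" "x \<in> cfT B" and B: "B > 0"
  shows "(\<lambda>n. f (Yx x n)) \<longlonglongrightarrow> f_star f x"
proof -
  have xm: "x \<in> cfT (real m powr lam)" if "B \<le> real m powr lam" for m
    using x(2) cfT_mono[OF that] by auto
  have "Cauchy (\<lambda>n. f (Yx x n))"
    unfolding Cauchy_def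
  proof (intro allI impI)
    fix e :: real assume e: "e > 0"
    obtain M where M: "\<forall>m\<ge>M. \<forall>z\<in>cfT (real m powr lam). \<forall>x'\<in>cfV (real m powr lam) m z.
           \<forall>x''\<in>cfV (real m powr lam) m z. cmod (f x' - f x'') < e"
      using propS_ext[OF lam(2) e] by blast
    obtain m where m: "m \<ge> M" "real m powr lam \<ge> B" using pick_m[OF lam(1)] by blast
    show "\<exists>N. \<forall>k\<ge>N. \<forall>n\<ge>N. dist (f (Yx x k)) (f (Yx x n)) < e"
    proof (intro exI allI impI)
      fix k n assume k: "max m 2 \<le> k" and n: "max m 2 \<le> n"
      have "Yx x k \<in> cfV (real m powr lam) m x" "Yx x n \<in> cfV (real m powr lam) m x"
        using Y_cfV[OF x m(2)] k n by auto
      then show "dist (f (Yx x k)) (f (Yx x n)) < e"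
        using M m xm[OF m(2)] by (simp add: dist_norm)
    qed
  qed
  then obtain L where L: "(\<lambda>n. f (Yx x n)) \<longlonglongrightarrow> L"
    unfolding Cauchy_convergent_iff convergent_def by blast
  have within: "(f \<longlongrightarrow> L) (at x within (\<rat> \<inter> cfT B))"
    unfolding tendsto_iff
  proof (intro allI impI)
    fix e :: real assume e: "e > 0"
    obtain M where M: "\<forall>m\<ge>M. \<forall>z\<in>cfT (real m powr lam). \<forall>x'\<in>cfV (real m powr lam) m z.
           \<forall>x''\<in>cfV (real m powr lam) m z. cmod (f x' - f x'') < e / 2"
      using propS_ext[OF lam(2), of "e/2"] e by auto
    obtain m where m: "m \<ge> M" "real m powr lam \<ge> B" using pick_m[OF lam(1)] by blast
    define C where "C = max 1 (max B (real (m+2) * (ln (real (m+2)))\<^sup>2))"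
    have Cp: "(C + 1) ^ (2 * m + 2) > 0" unfolding C_def by simp
    obtain N where N: "\<And>n. n \<ge> N \<Longrightarrow> dist (f (Yx x n)) L < e / 2"
      using L e unfolding tendsto_iff eventually_sequentially by (metis half_gt_zero)
    define n where "n = max N (max m 2)"
    have Yn: "Yx x n \<in> cfV (real m powr lam) m x" using Y_cfV[OF x m(2)] unfolding n_def by auto
    have dn: "dist (f (Yx x n)) L < e / 2" using N unfolding n_def by auto
    show "\<forall>\<^sub>F y in at x within \<rat> \<inter> cfT B. dist (f y) L < e"
      unfolding eventually_at
    proof (intro exI[of _ "1 / (C + 1) ^ (2 * m + 2)"] conjI ballI impI)
      show "0 < 1 / (C + 1) ^ (2 * m + 2)" using Cp by simp
      fix y assume y: "y \<in> \<rat> \<inter> cfT B" and yd: "y \<noteq> x \<and> dist y x < 1 / (C + 1) ^ (2 * m + 2)"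
      have "(C + 1) ^ (2 * m + 2) * \<bar>y - x\<bar> < 1"
        using yd Cp by (simp add: dist_real_def field_simps)
      then have "y \<in> cfV (real m powr lam) m x"
        using close_cfV[OF x _ _ m(2)] y unfolding C_def by auto
      then have "cmod (f y - f (Yx x n)) < e / 2" using M m xm[OF m(2)] Yn by auto
      then show "dist (f y) L < e"
        using dn dist_triangle[of "f y" L "f (Yx x n)"] by (simp add: dist_norm)
    qed
  qed
  have "f_star f x = L"
    unfolding f_star_def using x(1)
  proof (simp, intro the_equality)
    show "\<exists>B>0. x \<in> cfT B \<and> (f \<longlongrightarrow> L) (at x within \<rat> \<inter> cfT B)" using B x within by blast
    fix L' assume "\<exists>B>0. x \<in> cfT B \<and> (f \<longlongrightarrow> L') (at x within \<rat> \<inter> cfT B)"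
    then obtain B' where B': "x \<in> cfT B'" "(f \<longlongrightarrow> L') (at x within \<rat> \<inter> cfT B')" by blast
    have "filterlim (Yx x) (at x within \<rat> \<inter> cfT B') sequentially"
      unfolding filterlim_at
    proof
      show "\<forall>\<^sub>F n in sequentially. Yx x n \<in> \<rat> \<inter> cfT B' \<and> Yx x n \<noteq> x"
        unfolding eventually_sequentially
        using Y_rat Y_cfT[OF x(1) B'(1)] x(1) by (metis IntI)
      show "Yx x \<longlonglongrightarrow> x" by (rule Y_lim[OF x(1)])
    qed
    from filterlim_compose[OF B'(2) this] have "(\<lambda>n. f (Yx x n)) \<longlonglongrightarrow> L'" .
    then show "L' = L" using L by (rule LIMSEQ_unique)
  qed
  then show ?thesis using L by simp
qed

lemma tln_mono: "1 \<le> (s::real) \<Longrightarrow> s \<le> t \<Longrightarrow> s * (ln s)\<^sup>2 \<le> t * (ln t)\<^sup>2"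
proof -
  assume a: "1 \<le> s" "s \<le> t"
  have "0 \<le> ln s" using a by simp
  moreover have "ln s \<le> ln t" using a by simp
  ultimately have "(ln s)\<^sup>2 \<le> (ln t)\<^sup>2" by (simp add: power_mono)
  then show ?thesis using a by (intro mult_mono) auto
qed

lemma pair_close:
  assumes Mp: "\<forall>z\<in>cfT (real m powr lam). \<forall>x'\<in>cfV (real m powr lam) m z.
           \<forall>x''\<in>cfV (real m powr lam) m z. cmod (f x' - f x'') < e"
    and e: "e > 0"
    and y: "y \<in> \<rat>" "y \<in> cfT B" and z: "z \<in> \<rat>" "z \<in> cfT B" and Bm: "B \<le> real m powr lam"
    and cl: "(max 1 (max B (real (m+2) * (ln (real (m+2)))\<^sup>2)) + 1) ^ (2 * m + 2) * \<bar>z - y\<bar> < 1"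
  shows "cmod (f z - f y) < e"
proof (cases "z = y")
  case True then show ?thesis using e by simp
next
  case False
  from main_sep[OF False _ cfT_bnd[OF z(2)] cfT_bnd[OF y(2)] cl]
  have s: "(\<forall>j\<le>m. cf_b z j = cf_b y j) \<and> enat m \<le> cf_len z \<and> enat m \<le> cf_len y" by simp
  have zT: "z \<in> cfT (real m powr lam)" using z cfT_mono[OF Bm] by auto
  have "z \<in> cfV (real m powr lam) m z" "y \<in> cfV (real m powr lam) m z"
    unfolding cfV_def using s y z cfT_mono[OF Bm] by auto
  then show ?thesis using Mp zT by blast
qed

lemma close_q:
  assumes q: "(q::real) > 0" and d: "\<bar>y - z\<bar> < q powr (1/4) / q" and K: "K \<le> q powr (3/4)" "0 \<le> K"
  shows "K * \<bar>y - z\<bar> < 1"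
proof -
  have "K * \<bar>y - z\<bar> \<le> q powr (3/4) * \<bar>y - z\<bar>" using K by (intro mult_right_mono) auto
  also have "\<dots> < q powr (3/4) * (q powr (1/4) / q)" using d q by (intro mult_strict_left_mono) auto
  also have "\<dots> = (q powr (3/4) * q powr (1/4)) / q" by simp
  also have "q powr (3/4) * q powr (1/4) = q" using q by (simp add: powr_add[symmetric])
  finally show ?thesis using q by simp
qed

theorem lemma3p3:
  fixes f :: "real \<Rightarrow> complex"
  assumes "\<exists>lam>1. propS lam f"
  shows "\<forall>\<epsilon>>0. \<forall>\<^sub>F q in sequentially. \<forall>a\<in>frakA q.
           \<forall>x\<in>{(real a - real q powr (1/4)) / real q <..< (real a + real q powr (1/4)) / real q}
                 \<inter> (frakT q \<union> (\<lambda>b. real b / real q) ` frakA q).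
             cmod (f_star f (real a / real q) - f_star f x) \<le> \<epsilon>"
proof (intro allI impI)
  fix \<epsilon> :: real assume eps: "\<epsilon> > 0"
  obtain lam where lam: "lam > 1" "propS lam f" using assms by blast
  define e where "e = 1 / lam"
  have e: "0 < e" "e < 1" unfolding e_def using lam by auto
  have elam: "e * lam = 1" unfolding e_def using lam by simp
  obtain M where M: "\<forall>m\<ge>M. \<forall>z\<in>cfT (real m powr lam). \<forall>x'\<in>cfV (real m powr lam) m z.
           \<forall>x''\<in>cfV (real m powr lam) m z. cmod (f x' - f x'') < \<epsilon> / 2"
    using propS_ext[OF lam(2), of "\<epsilon>/2"] eps by auto
  define BB where "BB t = ln t * (ln (ln t))\<^sup>2" for t :: real
  have R: "\<forall>\<^sub>F t in at_top. 1 \<le> t \<and> 1 \<le> BB t \<and> real M \<le> BB t powr e \<and>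
      (BB t powr e + 3) * (ln (BB t powr e + 3))\<^sup>2 \<le> BB t \<and>
      (2 * BB t powr e + 4) * ln (BB t + 1) \<le> 3 / 4 * ln t"
    unfolding BB_def using e by (intro eventually_conj; real_asymp)
  have Rq: "\<forall>\<^sub>F q in sequentially. 1 \<le> real q \<and> 1 \<le> BB (real q) \<and> real M \<le> BB (real q) powr e \<and>
      (BB (real q) powr e + 3) * (ln (BB (real q) powr e + 3))\<^sup>2 \<le> BB (real q) \<and>
      (2 * BB (real q) powr e + 4) * ln (BB (real q) + 1) \<le> 3 / 4 * ln (real q)"
    using filterlim_real_sequentially R unfolding filterlim_iff by blast
  show "\<forall>\<^sub>F q in sequentially. \<forall>a\<in>frakA q.
           \<forall>x\<in>{(real a - real q powr (1/4)) / real q <..< (real a + real q powr (1/4)) / real q}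
                 \<inter> (frakT q \<union> (\<lambda>b. real b / real q) ` frakA q).
             cmod (f_star f (real a / real q) - f_star f x) \<le> \<epsilon>"
    using Rq
  proof (rule eventually_mono)
    fix q :: nat
    assume Q: "1 \<le> real q \<and> 1 \<le> BB (real q) \<and> real M \<le> BB (real q) powr e \<and>
      (BB (real q) powr e + 3) * (ln (BB (real q) powr e + 3))\<^sup>2 \<le> BB (real q) \<and>
      (2 * BB (real q) powr e + 4) * ln (BB (real q) + 1) \<le> 3 / 4 * ln (real q)"
    define Bq where "Bq = BB (real q)"
    have Bq_def': "cfBq q = Bq" unfolding Bq_def BB_def cfBq_def by simp
    have q1: "1 \<le> real q" and B1: "1 \<le> Bq" and BM: "real M \<le> Bq powr e"
      and B2: "(Bq powr e + 3) * (ln (Bq powr e + 3))\<^sup>2 \<le> Bq"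
      and B3: "(2 * Bq powr e + 4) * ln (Bq + 1) \<le> 3 / 4 * ln (real q)"
      using Q unfolding Bq_def by auto
    define m where "m = nat \<lceil>Bq powr e\<rceil>"
    have m_ge: "real m \<ge> Bq powr e" unfolding m_def by linarith
    have e0: "0 \<le> Bq powr e" by simp
    have mr: "real m = real_of_int \<lceil>Bq powr e\<rceil>" unfolding m_def using e0 by simp
    have m_le: "real m \<le> Bq powr e + 1" using mr ceiling_correct[of "Bq powr e"] by linarith
    have mM: "M \<le> m" using BM m_ge by linarith
    have Bpos: "Bq > 0" using B1 by simp
    have mpow: "Bq \<le> real m powr lam"
    proof -
      have "Bq = (Bq powr e) powr lam" using Bpos elam by (simp add: powr_powr)
      also have "\<dots> \<le> real m powr lam" using m_ge lam(1) by (intro powr_mono2) auto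
      finally show ?thesis .
    qed
    define C where "C = max 1 (max Bq (real (m+2) * (ln (real (m+2)))\<^sup>2))"
    have CB: "C = Bq"
    proof -
      have "real (m+2) * (ln (real (m+2)))\<^sup>2 \<le> (Bq powr e + 3) * (ln (Bq powr e + 3))\<^sup>2"
        using m_le by (intro tln_mono) auto
      then show ?thesis unfolding C_def using B1 B2 by simp
    qed
    have K: "(C + 1) ^ (2 * m + 2) \<le> real q powr (3/4)"
    proof -
      have "ln ((Bq + 1) ^ (2 * m + 2)) = real (2 * m + 2) * ln (Bq + 1)"
        using Bpos by (intro ln_realpow)
      also have "\<dots> \<le> (2 * Bq powr e + 4) * ln (Bq + 1)"
        using m_le Bpos by (intro mult_right_mono) auto
      also have "\<dots> \<le> 3 / 4 * ln (real q)" by (rule B3)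
      also have "\<dots> = ln (real q powr (3/4))" using q1 by (simp add: ln_powr)
      finally have "ln ((Bq + 1) ^ (2 * m + 2)) \<le> ln (real q powr (3/4))" .
      then have "(Bq + 1) ^ (2 * m + 2) \<le> real q powr (3/4)"
        using Bpos q1 by (subst (asm) ln_le_cancel_iff) auto
      then show ?thesis using CB by simp
    qed
    have K0: "0 \<le> (C + 1) ^ (2 * m + 2)" using CB Bpos by simp
    have qpos: "real q > 0" using q1 by simp
    have Mm: "\<forall>z\<in>cfT (real m powr lam). \<forall>x'\<in>cfV (real m powr lam) m z.
           \<forall>x''\<in>cfV (real m powr lam) m z. cmod (f x' - f x'') < \<epsilon> / 2" using M mM by blast
    have eps2: "\<epsilon> / 2 > 0" using eps by simp
    show "\<forall>a\<in>frakA q.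
           \<forall>x\<in>{(real a - real q powr (1/4)) / real q <..< (real a + real q powr (1/4)) / real q}
                 \<inter> (frakT q \<union> (\<lambda>b. real b / real q) ` frakA q).
             cmod (f_star f (real a / real q) - f_star f x) \<le> \<epsilon>"
    proof (intro ballI)
      fix a x
      assume a: "a \<in> frakA q"
        and x: "x \<in> {(real a - real q powr (1/4)) / real q <..< (real a + real q powr (1/4)) / real q}
                 \<inter> (frakT q \<union> (\<lambda>b. real b / real q) ` frakA q)"
      define z0 where "z0 = real a / real q"
      have z0Q: "z0 \<in> \<rat>" unfolding z0_def by simp
      have z0T: "z0 \<in> cfT Bq" using a unfolding frakA_def z0_def Bq_def'[symmetric] by auto
      have fz0: "f_star f z0 = f z0" using z0Q by (simp add: f_star_def)
      have xi: "(real a - real q powr (1/4)) / real q < x" "x < (real a + real q powr (1/4)) / real q"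
        using x by auto
      have dx: "\<bar>z0 - x\<bar> < real q powr (1/4) / real q"
        using xi qpos unfolding z0_def by (simp add: diff_divide_distrib add_divide_distrib abs_less_iff)
      have clos: "(C + 1) ^ (2 * m + 2) * \<bar>z0 - y\<bar> < 1" if "\<bar>z0 - y\<bar> < real q powr (1/4) / real q" for y
        by (rule close_q[OF qpos that K K0])
      have x2: "x \<in> frakT q \<or> x \<in> (\<lambda>b. real b / real q) ` frakA q" using x by auto
      then show "cmod (f_star f (real a / real q) - f_star f x) \<le> \<epsilon>"
      proof
        assume "x \<in> (\<lambda>b. real b / real q) ` frakA q"
        then obtain b where b: "b \<in> frakA q" "x = real b / real q" by auto
        have xQ: "x \<in> \<rat>" using b by simp
        have xT: "x \<in> cfT Bq" using b unfolding frakA_def Bq_def'[symmetric] by auto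
        have "cmod (f z0 - f x) < \<epsilon> / 2"
          using pair_close[OF Mm eps2 xQ xT z0Q z0T mpow] clos[OF dx] unfolding C_def by simp
        then show ?thesis using fz0 xQ eps unfolding z0_def by (simp add: f_star_def)
      next
        assume "x \<in> frakT q"
        then have xn: "x \<notin> \<rat>" and xT: "x \<in> cfT Bq" unfolding frakT_def Bq_def' by auto
        have L: "(\<lambda>n. f (Yx x n)) \<longlonglongrightarrow> f_star f x" by (rule fstar_seq[OF lam xn xT Bpos])
        define d where "d = real q powr (1/4) / real q - \<bar>z0 - x\<bar>"
        have d: "d > 0" using dx unfolding d_def by simp
        have ev1: "\<forall>\<^sub>F n in sequentially. dist (Yx x n) x < d"
          using Y_lim[OF xn] d unfolding tendsto_iff by blast
        have ev2: "\<forall>\<^sub>F n in sequentially. dist (f (Yx x n)) (f_star f x) < \<epsilon> / 2"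
          using L eps2 unfolding tendsto_iff by blast
        have ev3: "\<forall>\<^sub>F n in sequentially. 2 \<le> n" by (rule eventually_ge_at_top)
        obtain n where n: "dist (Yx x n) x < d" "dist (f (Yx x n)) (f_star f x) < \<epsilon> / 2" "2 \<le> n"
          using eventually_happens'[OF _ eventually_conj[OF ev1 eventually_conj[OF ev2 ev3]]] by auto
        define y where "y = Yx x n"
        have yQ: "y \<in> \<rat>" unfolding y_def by (rule Y_rat)
        have yT: "y \<in> cfT Bq" unfolding y_def by (rule Y_cfT[OF xn xT n(3)])
        have dy: "\<bar>z0 - y\<bar> < real q powr (1/4) / real q"
          using n(1) unfolding y_def d_def dist_real_def by linarith
        have "cmod (f z0 - f y) < \<epsilon> / 2"
          using pair_close[OF Mm eps2 yQ yT z0Q z0T mpow] clos[OF dy] unfolding C_def by simp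
        then have "cmod (f z0 - f_star f x) < \<epsilon>"
          using n(2) norm_triangle_lt[of "f z0 - f y" "f y - f_star f x" \<epsilon>]
          unfolding y_def dist_norm by simp
        then show ?thesis using fz0 unfolding z0_def by simp
      qed
    qed
  qed
qed

end
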